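(* Let $(\Re,S,V)$ be a vector $S$-metric space and let $H,K,P,Q:\Re\to\Re$ be four maps such that there is $\rho\in[0,1)$ with $$S(Hx,Hy,Kz)\preceq \rho\, U(x,y,z)\quad\text{for all } x,y,z\in\Re,$$ where $$U(x,y,z)=\max\{S(Px,Py,Qz),\ S(Px,Px,Hx),\ S(Qz,Qz,Kz),\ S(Qz,Qz,Hx)\}$$ (the maximum being the supremum in $V$), and suppose the pairs $(H,P)$ and $(K,Q)$ are occasionally weakly compatible. Then $H,K,P,Q$ have a unique common fixed point in $\Re$, i.e. there is exactly one $\xi\in\Re$ with $H\xi=K\xi=P\xi=Q\xi=\xi$.
   Context: A vector lattice (Riesz space) $V$ is an ordered real vector space whose order $\preceq$ is a lattice order; $\max$ of finitely many elements of $V$ denotes their supremum. Given a vector lattice $V$ and a nonempty set $\Re$, a vector $S$-metric is a map $S:\Re^3\to V$ such that for all $x_1,x_2,x_3,\alpha\in\Re$: (a) $S(x_1,x_2,x_3)\succeq 0$; (b) $S(x_1,x_2,x_3)=0$ iff $x_1=x_2=x_3$; (c) $S(x_1,x_2,x_3)\preceq S(x_1,x_2,\alpha)+S(x_2,x_2,\alpha)+S(x_3,x_3,\alpha)$. The triple $(\Re,S,V)$ is a vector $S$-metric space. Two maps $A,B:\Re\to\Re$ are occasionally weakly compatible if there exists a coincidence point $x\in\Re$ of $A$ and $B$ (i.e. $Ax=Bx$) such that $ABx=BAx$. *)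

theory Defs
  imports "HOL-Analysis.Analysis"
begin

class vector_lattice = ordered_real_vector + lattice

definition vector_S_metric :: "'a set \<Rightarrow> ('a \<Rightarrow> 'a \<Rightarrow> 'a \<Rightarrow> 'v::vector_lattice) \<Rightarrow> bool" where
  "vector_S_metric R S \<longleftrightarrow> R \<noteq> {} \<and>
     (\<forall>x1\<in>R. \<forall>x2\<in>R. \<forall>x3\<in>R.
        0 \<le> S x1 x2 x3 \<and>
        (S x1 x2 x3 = 0 \<longleftrightarrow> x1 = x2 \<and> x2 = x3) \<and>
        (\<forall>a\<in>R. S x1 x2 x3 \<le> S x1 x2 a + S x2 x2 a + S x3 x3 a))"

definition owc :: "'a set \<Rightarrow> ('a \<Rightarrow> 'a) \<Rightarrow> ('a \<Rightarrow> 'a) \<Rightarrow> bool" where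
  "owc R A B \<longleftrightarrow> (\<exists>x\<in>R. A x = B x \<and> A (B x) = B (A x))"

end

theory Submission
  imports Defs
begin

lemma vl_zero:
  fixes u :: "'v::vector_lattice" and \<rho> :: real
  assumes "0 \<le> u" "\<rho> < 1" "u \<le> \<rho> *\<^sub>R u"
  shows "u = 0"
proof -
  have "(1 - \<rho>) *\<^sub>R u \<le> 0" using assms(3) by (simp add: algebra_simps)
  then have "inverse (1 - \<rho>) *\<^sub>R ((1 - \<rho>) *\<^sub>R u) \<le> inverse (1 - \<rho>) *\<^sub>R 0"
    using assms(2) by (intro scaleR_left_mono) auto
  then have "u \<le> 0" using assms(2) by simp
  then show ?thesis using assms(1) by (simp add: order_antisym)
qed

lemma Ssym:
  assumes "vector_S_metric R S" "x \<in> R" "y \<in> R"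
  shows "S x x y = S y y x"
proof -
  have "\<And>x y. x \<in> R \<Longrightarrow> y \<in> R \<Longrightarrow> S x x y \<le> S y y x"
  proof -
    fix x y assume xy: "x \<in> R" "y \<in> R"
    have "S x x y \<le> S x x x + S x x x + S y y x" using assms(1) xy unfolding vector_S_metric_def by blast
    moreover have "S x x x = 0" using assms(1) xy unfolding vector_S_metric_def by blast
    ultimately show "S x x y \<le> S y y x" by simp
  qed
  then show ?thesis using assms by (meson order_antisym)
qed

lemma key:
  fixes S :: "'a \<Rightarrow> 'a \<Rightarrow> 'a \<Rightarrow> 'v::vector_lattice"
  assumes "vector_S_metric R S" "a \<in> R" "b \<in> R" "\<rho> < 1"
    "S a a b \<le> \<rho> *\<^sub>R sup (sup (S a a b) (S c c c)) (sup (S d d d) (S b b a))"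
    "c \<in> R" "d \<in> R"
  shows "a = b"
proof -
  have z: "S c c c = 0" "S d d d = 0" using assms unfolding vector_S_metric_def by blast+
  have p: "0 \<le> S a a b" using assms unfolding vector_S_metric_def by blast
  have "S b b a = S a a b" using Ssym assms by metis
  then have "S a a b \<le> \<rho> *\<^sub>R S a a b" using assms(5) z p by (simp add: sup_absorb1 sup_absorb2)
  then have "S a a b = 0" using vl_zero p assms(4) by blast
  then show ?thesis using assms unfolding vector_S_metric_def by blast
qed

theorem theorem2p3:
  fixes R :: "'a set" and S :: "'a \<Rightarrow> 'a \<Rightarrow> 'a \<Rightarrow> 'v::vector_lattice"
    and H K P Q :: "'a \<Rightarrow> 'a" and \<rho> :: real
  assumes "vector_S_metric R S"
    and "\<forall>x\<in>R. H x \<in> R" and "\<forall>x\<in>R. K x \<in> R" and "\<forall>x\<in>R. P x \<in> R" and "\<forall>x\<in>R. Q x \<in> R"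
    and "0 \<le> \<rho>" and "\<rho> < 1"
    and "\<forall>x\<in>R. \<forall>y\<in>R. \<forall>z\<in>R.
           S (H x) (H y) (K z) \<le> \<rho> *\<^sub>R
             sup (sup (S (P x) (P y) (Q z)) (S (P x) (P x) (H x)))
                 (sup (S (Q z) (Q z) (K z)) (S (Q z) (Q z) (H x)))"
    and "owc R H P" and "owc R K Q"
  shows "\<exists>!\<xi>. \<xi> \<in> R \<and> H \<xi> = \<xi> \<and> K \<xi> = \<xi> \<and> P \<xi> = \<xi> \<and> Q \<xi> = \<xi>"
proof -
  note C = assms(8)
  obtain x where x: "x \<in> R" "H x = P x" "H (P x) = P (H x)" using assms(9) unfolding owc_def by blast
  obtain y where y: "y \<in> R" "K y = Q y" "K (Q y) = Q (K y)" using assms(10) unfolding owc_def by blast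
  have HxR: "H x \<in> R" and KyR: "K y \<in> R" using x y assms(2,3) by auto
  have "S (H x) (H x) (K y) \<le> \<rho> *\<^sub>R sup (sup (S (H x) (H x) (K y)) (S (H x) (H x) (H x)))
                 (sup (S (K y) (K y) (K y)) (S (K y) (K y) (H x)))"
    using C x y by (metis)
  then have e: "H x = K y" using key[OF assms(1) HxR KyR assms(7)] HxR KyR by blast
  define w where "w = H x"
  have wR: "w \<in> R" using HxR w_def by simp
  have Pw: "P w = H w" using x w_def by simp
  have Qw: "Q w = K w" using y e w_def by simp
  have HwR: "H w \<in> R" and KwR: "K w \<in> R" using wR assms(2,3) by auto
  have "S (H w) (H w) (K y) \<le> \<rho> *\<^sub>R sup (sup (S (P w) (P w) (Q y)) (S (P w) (P w) (H w)))
                 (sup (S (Q y) (Q y) (K y)) (S (Q y) (Q y) (H w)))"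
    using C wR y(1) by blast
  then have "S (H w) (H w) w \<le> \<rho> *\<^sub>R sup (sup (S (H w) (H w) w) (S (H w) (H w) (H w)))
                 (sup (S w w w) (S w w (H w)))"
    using Pw y e w_def by simp
  then have h: "H w = w" using key[OF assms(1) HwR wR assms(7)] HwR wR by blast
  have "S (H x) (H x) (K w) \<le> \<rho> *\<^sub>R sup (sup (S (P x) (P x) (Q w)) (S (P x) (P x) (H x)))
                 (sup (S (Q w) (Q w) (K w)) (S (Q w) (Q w) (H x)))"
    using C wR x(1) by blast
  then have "S w w (K w) \<le> \<rho> *\<^sub>R sup (sup (S w w (K w)) (S w w w))
                 (sup (S (K w) (K w) (K w)) (S (K w) (K w) w))"
    using Qw x w_def by simp
  then have k: "w = K w" using key[OF assms(1) wR KwR assms(7)] wR KwR by blast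
  show ?thesis
  proof (rule ex1I[of _ w])
    show "w \<in> R \<and> H w = w \<and> K w = w \<and> P w = w \<and> Q w = w" using wR h k Pw Qw by simp
  next
    fix z assume z: "z \<in> R \<and> H z = z \<and> K z = z \<and> P z = z \<and> Q z = z"
    have "S (H w) (H w) (K z) \<le> \<rho> *\<^sub>R sup (sup (S (P w) (P w) (Q z)) (S (P w) (P w) (H w)))
                 (sup (S (Q z) (Q z) (K z)) (S (Q z) (Q z) (H w)))"
      using C wR z by blast
    then have "S w w z \<le> \<rho> *\<^sub>R sup (sup (S w w z) (S w w w)) (sup (S z z z) (S z z w))"
      using z h Pw by simp
    then show "z = w" using key[OF assms(1) wR _ assms(7)] wR z by metis
  qed
qed

end
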